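(* Let $g$ be univalent in $\mathbb{D}$. Then there do not exist $\eta\in(0,1)$, $\delta>0$ and $c>0$ such that $m(G_c\cap\Delta(\alpha,\eta))\ge\delta\,m(\Delta(\alpha,\eta))$ for all $\alpha\in\mathbb{D}$, where $G_c=\{z\in\mathbb{D}:|g'(z)|(1-|z|)>c\}$.
   Context: $\mathbb{D}$ is the unit disc, $dm$ normalized area measure, and $\Delta(\alpha,\eta)=\{z\in\mathbb{D}:|\frac{\alpha-z}{1-\bar\alpha z}|<\eta\}$ the pseudohyperbolic disc. *)

theory Defs
  imports "HOL-Complex_Analysis.Complex_Analysis"
begin

definition norm_area :: "complex set \<Rightarrow> real" where
  "norm_area A = measure lborel A / pi"

definition pseudo_disc :: "complex \<Rightarrow> real \<Rightarrow> complex set" where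
  "pseudo_disc \<alpha> \<eta> = {z \<in> ball 0 1. cmod ((\<alpha> - z) / (1 - cnj \<alpha> * z)) < \<eta>}"

definition univalent :: "(complex \<Rightarrow> complex) \<Rightarrow> bool" where
  "univalent g \<longleftrightarrow> g holomorphic_on ball 0 1 \<and> inj_on g (ball 0 1)"

definition G_set :: "(complex \<Rightarrow> complex) \<Rightarrow> real \<Rightarrow> complex set" where
  "G_set g c = {z \<in> ball 0 1. cmod (deriv g z) * (1 - cmod z) > c}"

end

theory Submission
  imports Defs
begin


lemma den_nz:
  fixes a z :: complex
  assumes "cmod a < 1" "cmod z \<le> 1"
  shows "cmod (1 - cnj a * z) \<ge> 1 - cmod a"
proof -
  have "cmod (cnj a * z) \<le> cmod a" using assms by (simp add: norm_mult mult_left_le)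
  moreover have "cmod (1 - cnj a * z) \<ge> 1 - cmod (cnj a * z)"
    by (metis norm_one norm_triangle_ineq2)
  ultimately show ?thesis by linarith
qed

lemma pd_identity:
  fixes a z :: complex
  shows "(cmod (1 - cnj a * z))^2 - (cmod (a - z))^2 = (1 - (cmod a)^2) * (1 - (cmod z)^2)"
  unfolding cmod_power2 by (simp add: power2_eq_square algebra_simps)

lemma T_invol:
  fixes a z :: complex
  assumes "cmod a < 1" "cmod z < 1"
  shows "(a - (a - z)/(1 - cnj a * z)) / (1 - cnj a * ((a - z)/(1 - cnj a * z))) = z"
proof -
  have d: "1 - cnj a * z \<noteq> 0" using den_nz[of a z] assms by auto
  have "cnj a * a = of_real ((cmod a)^2)" using complex_norm_square[of a] by (simp add: mult.commute)
  moreover have "(cmod a)^2 < 1" using assms by (simp add: power_less_one_iff abs_square_less_1)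
  ultimately have e: "1 - cnj a * a \<noteq> 0"
    by (metis eq_iff_diff_eq_0 less_irrefl of_real_eq_1_iff)
  have n: "a - (a - z)/(1 - cnj a * z) = z*(1 - cnj a*a)/(1 - cnj a * z)"
    using d by (simp add: field_simps)
  have m: "1 - cnj a*((a - z)/(1 - cnj a * z)) = (1 - cnj a*a)/(1 - cnj a * z)"
    using d by (simp add: field_simps)
  show ?thesis unfolding n m using d e by simp
qed

lemma T_norm:
  fixes a z :: complex
  assumes "cmod a < 1" "cmod z < 1"
  shows "cmod ((a - z)/(1 - cnj a * z)) < 1"
proof -
  have "(a - z)/(1 - cnj a * z) = - Moebius_function 0 a z"
    by (simp add: Moebius_function_simple minus_divide_left)
  then show ?thesis using Moebius_function_norm_lt_1[OF assms, of 0] by simp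
qed

lemma T_diff:
  fixes a z w :: complex
  assumes "1 - cnj a * w \<noteq> 0" "1 - cnj a * z \<noteq> 0"
  shows "(a - w)/(1 - cnj a * w) - (a - z)/(1 - cnj a * z) = (z - w)*(1 - cnj a * a)/((1 - cnj a * w)*(1 - cnj a * z))"
  using assms by (simp add: field_simps)

lemma cnj_self: "cnj a * a = complex_of_real ((cmod a)^2)"
  using complex_norm_square[of a] by (simp add: mult.commute)

lemma norm_1m_cnj_self: "cmod a < 1 \<Longrightarrow> cmod (1 - cnj a * a) = 1 - (cmod a)^2"
proof -
  assume "cmod a < 1"
  then have "(cmod a)^2 \<le> 1" by (simp add: abs_square_le_1 less_imp_le)
  have "1 - cnj a * a = complex_of_real (1 - (cmod a)^2)" by (simp add: cnj_self)
  then show ?thesis using \<open>(cmod a)^2 \<le> 1\<close> by (simp del: of_real_diff)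
qed

lemma ball_sub_pd:
  fixes \<alpha> :: complex
  assumes "0 < \<eta>" "\<eta> < 1" "cmod \<alpha> < 1"
  shows "ball \<alpha> (\<eta>*(1 - cmod \<alpha>)/2) \<subseteq> pseudo_disc \<alpha> \<eta>"
proof
  fix z assume "z \<in> ball \<alpha> (\<eta>*(1 - cmod \<alpha>)/2)"
  define t where "t = \<eta>*(1 - cmod \<alpha>)/2"
  have zt: "cmod (z - \<alpha>) < t" using \<open>z \<in> _\<close> by (simp add: t_def dist_norm norm_minus_commute)
  have t0: "t \<ge> 0" using assms by (simp add: t_def)
  have tle: "t \<le> (1 - cmod \<alpha>)/2" using assms by (simp add: t_def mult_left_le_one_le)
  have "cmod z \<le> cmod \<alpha> + cmod (z - \<alpha>)" by (metis add.commute diff_add_cancel norm_triangle_ineq)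
  then have z1: "cmod z < 1" using zt tle assms(3) by argo
  have eq: "1 - cnj \<alpha> * z = (1 - cnj \<alpha> * \<alpha>) - cnj \<alpha> * (z - \<alpha>)" by (simp add: algebra_simps)
  have "cmod (cnj \<alpha> * (z - \<alpha>)) \<le> t" using zt assms
    by (simp add: norm_mult) (metis less_eq_real_def mult_le_cancel_right2 norm_ge_zero order.trans mult_left_le_one_le)
  then have "cmod (1 - cnj \<alpha> * z) \<ge> 1 - (cmod \<alpha>)^2 - t"
    using norm_1m_cnj_self[OF assms(3)] norm_triangle_ineq2[of "1 - cnj \<alpha> * \<alpha>" "cnj \<alpha> * (z - \<alpha>)"] by (subst eq) argo
  moreover have "(cmod \<alpha>)^2 \<le> cmod \<alpha>" using assms by (simp add: power2_eq_square mult_left_le_one_le)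
  ultimately have d: "cmod (1 - cnj \<alpha> * z) \<ge> 1 - cmod \<alpha> - t" by linarith
  have "t * (1 + \<eta>) \<le> \<eta> * (1 - cmod \<alpha>)"
  proof -
    have "t * (1 + \<eta>) = \<eta>*(1 - cmod \<alpha>) * ((1+\<eta>)/2)" by (simp add: t_def)
    also have "\<dots> \<le> \<eta>*(1 - cmod \<alpha>) * 1"
      using assms by (intro mult_left_mono) auto
    finally show ?thesis by simp
  qed
  then have "t \<le> \<eta> * (1 - cmod \<alpha> - t)" by (simp add: algebra_simps)
  also have "\<dots> \<le> \<eta> * cmod (1 - cnj \<alpha> * z)" using d assms by (intro mult_left_mono) auto
  finally have "cmod (\<alpha> - z) < \<eta> * cmod (1 - cnj \<alpha> * z)" using zt by (simp add: norm_minus_commute)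
  moreover have "cmod (1 - cnj \<alpha> * z) > 0"
    using den_nz[of \<alpha> z] assms z1 t0 tle d by linarith
  ultimately have "cmod ((\<alpha> - z) / (1 - cnj \<alpha> * z)) < \<eta>"
    by (simp add: norm_divide divide_less_eq)
  then show "z \<in> pseudo_disc \<alpha> \<eta>" using z1 by (simp add: pseudo_disc_def)
qed

lemma pd_basic:
  fixes \<alpha> z :: complex
  assumes "0 < \<eta>" "\<eta> < 1" "cmod \<alpha> < 1" "z \<in> pseudo_disc \<alpha> \<eta>"
  shows "cmod z < 1" "cmod (1 - cnj \<alpha> * z) \<ge> 1 - cmod \<alpha>"
    "cmod (\<alpha> - z) < \<eta> * cmod (1 - cnj \<alpha> * z)"
proof -
  show z1: "cmod z < 1" using assms by (simp add: pseudo_disc_def)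
  show d: "cmod (1 - cnj \<alpha> * z) \<ge> 1 - cmod \<alpha>" using den_nz[of \<alpha> z] assms z1 by simp
  have "cmod (1 - cnj \<alpha> * z) > 0" using d assms by linarith
  then show "cmod (\<alpha> - z) < \<eta> * cmod (1 - cnj \<alpha> * z)"
    using assms by (simp add: pseudo_disc_def norm_divide divide_less_eq)
qed

lemma pd_upper:
  fixes \<alpha> z :: complex
  assumes "0 < \<eta>" "\<eta> < 1" "cmod \<alpha> < 1" "z \<in> pseudo_disc \<alpha> \<eta>"
  shows "1 - cmod z \<le> 2*(1 - cmod \<alpha>)/(1 - \<eta>)"
proof -
  note b = pd_basic[OF assms]
  define d where "d = cmod (1 - cnj \<alpha> * z)"
  have eq: "1 - cnj \<alpha> * z = (1 - cnj \<alpha> * \<alpha>) + cnj \<alpha> * (\<alpha> - z)" by (simp add: algebra_simps)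
  have d1: "d \<le> (1 - (cmod \<alpha>)^2) + cmod \<alpha> * cmod (\<alpha> - z)"
    unfolding d_def eq using norm_triangle_ineq[of "1 - cnj \<alpha> * \<alpha>" "cnj \<alpha> * (\<alpha> - z)"]
      norm_1m_cnj_self[OF assms(3)] by (simp add: norm_mult)
  have d2: "cmod \<alpha> * cmod (\<alpha> - z) \<le> cmod (\<alpha> - z)"
    using assms by (simp add: mult_left_le_one_le)
  have d3: "cmod (\<alpha> - z) \<le> \<eta> * d" using b(3) unfolding d_def by simp
  have d4: "(cmod \<alpha>)^2 \<ge> 2 * cmod \<alpha> - 1"
    using sum_power2_ge_zero[of "cmod \<alpha> - 1" 0] by (simp add: power2_eq_square algebra_simps)
  have "d * (1 - \<eta>) \<le> 2 * (1 - cmod \<alpha>)" using d1 d2 d3 d4 by (simp add: algebra_simps)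
  then have dd: "d \<le> 2*(1 - cmod \<alpha>)/(1-\<eta>)" using assms by (simp add: le_divide_eq mult.commute)
  have "cmod (\<alpha> - z) \<le> \<eta> * d" using b(3) d_def by simp
  also have "\<dots> \<le> \<eta> * (2*(1 - cmod \<alpha>)/(1-\<eta>))" using dd assms by (intro mult_left_mono) auto
  finally have az: "cmod (\<alpha> - z) \<le> \<eta> * (2*(1 - cmod \<alpha>)/(1-\<eta>))" .
  have "cmod \<alpha> \<le> cmod z + cmod (\<alpha> - z)" by (metis diff_add_cancel norm_triangle_ineq add.commute)
  then have "1 - cmod z \<le> (1 - cmod \<alpha>) + \<eta> * (2*(1 - cmod \<alpha>)/(1-\<eta>))" using az by linarith
  also have "\<dots> = (1 - cmod \<alpha>) * (1 + \<eta>)/(1-\<eta>)" using assms by (simp add: field_simps)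
  also have "\<dots> \<le> (1 - cmod \<alpha>) * 2/(1-\<eta>)" using assms
    by (intro divide_right_mono mult_left_mono) auto
  finally show ?thesis by (simp add: mult.commute)
qed

lemma pd_lower:
  fixes \<alpha> z :: complex
  assumes "0 < \<eta>" "\<eta> < 1" "cmod \<alpha> < 1" "z \<in> pseudo_disc \<alpha> \<eta>"
  shows "(1 - \<eta>^2)*(1 - cmod \<alpha>)/4 \<le> 1 - cmod z"
proof -
  note b = pd_basic[OF assms]
  define d where "d = cmod (1 - cnj \<alpha> * z)"
  have id: "d^2 - (cmod (\<alpha> - z))^2 = (1 - (cmod \<alpha>)^2) * (1 - (cmod z)^2)"
    using pd_identity unfolding d_def by simp
  have "(cmod (\<alpha> - z))^2 \<le> (\<eta> * d)^2"
    using b(3) unfolding d_def by (intro power_mono) auto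
  then have "(1 - \<eta>^2) * d^2 \<le> (1 - (cmod \<alpha>)^2) * (1 - (cmod z)^2)"
    using id by (simp add: power_mult_distrib algebra_simps)
  moreover have "(1 - \<eta>^2) * (1 - cmod \<alpha>)^2 \<le> (1 - \<eta>^2) * d^2"
    using b(2) assms unfolding d_def
    by (intro mult_left_mono power_mono) (auto simp: abs_square_le_1 power_le_one)
  ultimately have A: "(1 - \<eta>^2) * (1 - cmod \<alpha>)^2 \<le> (1 - cmod \<alpha>)*(1 + cmod \<alpha>) * ((1 - cmod z)*(1 + cmod z))"
    by (simp add: power2_eq_square algebra_simps)
  have "(1 - cmod \<alpha>)*(1 + cmod \<alpha>) * ((1 - cmod z)*(1 + cmod z)) \<le> (1 - cmod \<alpha>)*2 * ((1 - cmod z)*2)"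
    using assms b(1) by (intro mult_mono) auto
  with A have "(1 - cmod \<alpha>) * ((1 - \<eta>^2) * (1 - cmod \<alpha>)) \<le> (1 - cmod \<alpha>) * (4*(1 - cmod z))"
    by (simp add: power2_eq_square algebra_simps)
  then have "(1 - \<eta>^2) * (1 - cmod \<alpha>) \<le> 4*(1 - cmod z)"
    using assms by (simp add: mult_le_cancel_left)
  then show ?thesis by simp
qed


lemma pd_ball_sub:
  fixes \<alpha> z :: complex
  assumes "0 < \<eta>" "\<eta> < \<eta>2" "\<eta>2 < 1" "cmod \<alpha> < 1" "z \<in> pseudo_disc \<alpha> \<eta>"
  shows "ball z (min ((\<eta>2 - \<eta>)/4) ((1 - \<eta>^2)/8) * (1 - cmod \<alpha>)) \<subseteq> pseudo_disc \<alpha> \<eta>2"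
proof
  fix w assume "w \<in> ball z (min ((\<eta>2 - \<eta>)/4) ((1 - \<eta>^2)/8) * (1 - cmod \<alpha>))"
  define s1 where "s1 = min ((\<eta>2 - \<eta>)/4) ((1 - \<eta>^2)/8)"
  have e1: "\<eta> < 1" using assms by simp
  have a0: "0 < 1 - cmod \<alpha>" using assms by simp
  have wz: "cmod (w - z) < s1 * (1 - cmod \<alpha>)"
    using \<open>w \<in> _\<close> by (simp add: s1_def dist_norm norm_minus_commute)
  have s1a: "s1 * (1 - cmod \<alpha>) \<le> (1 - \<eta>^2)/8 * (1 - cmod \<alpha>)"
    using a0 by (intro mult_right_mono) (auto simp: s1_def min_def)
  have lo: "(1 - \<eta>^2)*(1 - cmod \<alpha>)/4 \<le> 1 - cmod z" using pd_lower[OF assms(1) e1 assms(4,5)] .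
  note b = pd_basic[OF assms(1) e1 assms(4,5)]
  have "cmod w \<le> cmod z + cmod (w - z)" by (metis add.commute diff_add_cancel norm_triangle_ineq)
  then have w1: "cmod w < 1" using wz s1a lo b(1) by argo
  have dw: "cmod (1 - cnj \<alpha> * w) \<ge> 1 - cmod \<alpha>" using den_nz[of \<alpha> w] assms w1 by simp
  have dz: "cmod (1 - cnj \<alpha> * z) \<ge> 1 - cmod \<alpha>" using b(2) .
  have nzw: "1 - cnj \<alpha> * w \<noteq> 0" using dw a0 by auto
  have nzz: "1 - cnj \<alpha> * z \<noteq> 0" using dz a0 by auto
  have "cmod ((\<alpha> - w)/(1 - cnj \<alpha> * w) - (\<alpha> - z)/(1 - cnj \<alpha> * z))
        = cmod (z - w) * (1 - (cmod \<alpha>)^2) / (cmod (1 - cnj \<alpha> * w) * cmod (1 - cnj \<alpha> * z))"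
    using T_diff[OF nzw nzz] norm_1m_cnj_self[OF assms(4)] by (simp add: norm_mult norm_divide)
  also have "\<dots> \<le> cmod (z - w) * (1 - (cmod \<alpha>)^2) / ((1 - cmod \<alpha>) * (1 - cmod \<alpha>))"
    using dw dz a0 assms(4) mult_pos_pos[OF mult_pos_pos[OF order.strict_trans2[OF a0 dw] order.strict_trans2[OF a0 dz]] mult_pos_pos[OF a0 a0]]
    by (intro divide_left_mono mult_mono mult_nonneg_nonneg) (auto simp: abs_square_le_1 power_le_one)
  also have "\<dots> = cmod (z - w) * (1 + cmod \<alpha>) / (1 - cmod \<alpha>)"
  proof -
    have "1 - (cmod \<alpha>)^2 = (1 + cmod \<alpha>)*(1 - cmod \<alpha>)" by (simp add: power2_eq_square algebra_simps)
    then show ?thesis using a0 by (simp add: mult.assoc)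
  qed
  also have "\<dots> \<le> cmod (z - w) * 2 / (1 - cmod \<alpha>)"
    using a0 assms(4) by (intro divide_right_mono mult_left_mono) auto
  also have "\<dots> < s1 * (1 - cmod \<alpha>) * 2 / (1 - cmod \<alpha>)"
    using wz a0 by (intro divide_strict_right_mono) (auto simp: norm_minus_commute)
  also have "\<dots> = 2 * s1" using a0 by simp
  also have "\<dots> \<le> (\<eta>2 - \<eta>)/2" by (simp add: s1_def min_def)
  finally have dif: "cmod ((\<alpha> - w)/(1 - cnj \<alpha> * w) - (\<alpha> - z)/(1 - cnj \<alpha> * z)) < (\<eta>2 - \<eta>)/2" .
  have tz: "cmod ((\<alpha> - z)/(1 - cnj \<alpha> * z)) < \<eta>" using assms by (simp add: pseudo_disc_def)
  have "cmod ((\<alpha> - w)/(1 - cnj \<alpha> * w)) \<le> cmod ((\<alpha> - z)/(1 - cnj \<alpha> * z))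
        + cmod ((\<alpha> - w)/(1 - cnj \<alpha> * w) - (\<alpha> - z)/(1 - cnj \<alpha> * z))"
    by (metis add.commute diff_add_cancel norm_triangle_ineq)
  then have "cmod ((\<alpha> - w)/(1 - cnj \<alpha> * w)) < \<eta>2" using dif tz assms by argo
  then show "w \<in> pseudo_disc \<alpha> \<eta>2" using w1 by (simp add: pseudo_disc_def)
qed



lemma den_ne0: "cmod a < 1 \<Longrightarrow> cmod z \<le> 1 \<Longrightarrow> 1 - cnj a * z \<noteq> 0"
  using den_nz[of a z] by auto

lemma pd_sets: "pseudo_disc \<alpha> \<eta> \<in> sets lborel"
  unfolding pseudo_disc_def by measurable

lemma pd_area_pos:
  fixes \<alpha> :: complex
  assumes "0 < \<eta>" "\<eta> < 1" "cmod \<alpha> < 1"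
  shows "norm_area (pseudo_disc \<alpha> \<eta>) > 0"
proof -
  have sub: "pseudo_disc \<alpha> \<eta> \<subseteq> ball 0 1" by (auto simp: pseudo_disc_def)
  have "emeasure lborel (pseudo_disc \<alpha> \<eta>) \<le> emeasure lborel (ball (0::complex) 1)"
    by (intro emeasure_mono sub) simp
  also have "\<dots> < \<infinity>" by (rule emeasure_lborel_ball_finite)
  finally have fm: "pseudo_disc \<alpha> \<eta> \<in> fmeasurable lborel"
    using pd_sets by (intro fmeasurableI) auto
  have t: "0 < \<eta>*(1 - cmod \<alpha>)/2" using assms by simp
  have "0 < measure lborel (ball \<alpha> (\<eta>*(1 - cmod \<alpha>)/2))"
    using content_ball_pos[OF t, of \<alpha>] by simp
  also have "\<dots> \<le> measure lborel (pseudo_disc \<alpha> \<eta>)"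
    by (rule measure_mono_fmeasurable[OF ball_sub_pd[OF assms] _ fm]) simp
  finally show ?thesis by (simp add: norm_area_def)
qed

lemma exists_omitted:
  assumes "univalent g"
  shows "\<exists>w0. \<forall>z\<in>ball 0 1. g z \<noteq> w0"
proof (rule ccontr)
  assume "\<not> ?thesis"
  then have all: "\<And>w. \<exists>z\<in>ball 0 1. g z = w" by metis
  have hol: "g holomorphic_on ball 0 1" and inj: "inj_on g (ball 0 1)"
    using assms by (auto simp: univalent_def)
  obtain f where hf: "f holomorphic_on (g ` ball 0 1)" and fg: "\<And>z. z \<in> ball 0 1 \<Longrightarrow> f (g z) = z"
    using holomorphic_has_inverse[OF hol open_ball inj] by metis
  have U: "g ` ball 0 1 = UNIV" using all by (metis UNIV_eq_I imageI)
  have "range f \<subseteq> ball 0 1"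
  proof
    fix y assume "y \<in> range f"
    then obtain w where "y = f w" by auto
    obtain z where "z \<in> ball 0 1" "g z = w" using all by blast
    then show "y \<in> ball 0 1" using fg \<open>y = f w\<close> by auto
  qed
  then have "bounded (range f)" by (meson bounded_ball bounded_subset)
  then have "f constant_on UNIV" using hf U Liouville_theorem by metis
  then obtain k where k: "\<And>w. f w = k" by (auto simp: constant_on_def)
  have "0 = k" using fg[of 0] k by simp
  moreover have "1/2 = k" using fg[of "1/2"] k by simp
  ultimately show False by simp
qed

lemma Schwarz_bound:
  fixes H :: "complex \<Rightarrow> complex"
  assumes holH: "H holomorphic_on ball 0 1" and H1: "\<And>z. cmod z < 1 \<Longrightarrow> cmod (H z) < 1"
    and a1: "cmod \<alpha> < 1" and e0: "0 < \<eta>2" and e1: "\<eta>2 < 1" and z: "z \<in> pseudo_disc \<alpha> \<eta>2"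
  shows "cmod (H z - H \<alpha>) \<le> (1 - (cmod (H \<alpha>))^2)/(1 - \<eta>2)"
proof -
  define a where "a = H \<alpha>"
  have aa: "cmod a < 1" using H1 a1 by (simp add: a_def)
  define T where "T = (\<lambda>w. (\<alpha> - w)/(1 - cnj \<alpha> * w))"
  define M where "M = (\<lambda>u. (a - u)/(1 - cnj a * u))"
  define K where "K = M \<circ> H \<circ> T"
  have Tin: "T w \<in> ball 0 1" if "w \<in> ball 0 1" for w
    using T_norm[OF a1, of w] that by (simp add: T_def)
  have holT: "T holomorphic_on ball 0 1"
    unfolding T_def
    by (intro holomorphic_intros) (metis den_ne0[OF a1] less_imp_le mem_ball_0)
  have holM: "M holomorphic_on ball 0 1"
    unfolding M_def
    by (intro holomorphic_intros) (metis den_ne0[OF aa] less_imp_le mem_ball_0)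
  have Hin: "H ` ball 0 1 \<subseteq> ball 0 1" using H1 by auto
  have holMH: "(M \<circ> H) holomorphic_on ball 0 1" by (rule holomorphic_on_compose_gen[OF holH holM Hin])
  have holK: "K holomorphic_on ball 0 1"
    unfolding K_def by (rule holomorphic_on_compose_gen[OF holT holMH]) (use Tin in auto)
  have K0: "K 0 = 0" by (simp add: K_def T_def M_def a_def)
  have K1: "cmod (K w) < 1" if "cmod w < 1" for w
    using T_norm[OF aa, of "H (T w)"] H1[of "T w"] Tin[of w] that by (simp add: K_def M_def)
  define w where "w = T z"
  have z1: "cmod z < 1" and wl: "cmod w < \<eta>2" using z by (auto simp: pseudo_disc_def w_def T_def)
  have w1: "cmod w < 1" using wl e1 by simp
  have Tw: "T w = z" using T_invol[OF a1 z1] by (simp add: w_def T_def)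
  have Ksch: "cmod (K w) \<le> cmod w"
    using Schwarz_Lemma(1)[OF holK K0 K1 w1] by simp
  define u where "u = K w"
  have ul: "cmod u < \<eta>2" using Ksch wl by (simp add: u_def)
  have Mu: "M u = H z" using T_invol[OF aa H1[OF z1]] by (simp add: u_def K_def Tw M_def)
  have den: "cmod (1 - cnj a * u) \<ge> 1 - \<eta>2"
  proof -
    have "cmod (cnj a * u) \<le> cmod u" using aa by (simp add: norm_mult mult_left_le_one_le)
    then show ?thesis using norm_triangle_ineq2[of 1 "cnj a * u"] ul by simp
  qed
  have dnz: "1 - cnj a * u \<noteq> 0" using den e1 by auto
  have "H z - a = u * (cnj a * a - 1) / (1 - cnj a * u)"
    unfolding Mu[symmetric] M_def using dnz by (simp add: field_simps)
  then have "cmod (H z - a) = cmod u * (1 - (cmod a)^2) / cmod (1 - cnj a * u)"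
    using norm_1m_cnj_self[OF aa] by (simp add: norm_mult norm_divide norm_minus_commute)
  also have "\<dots> \<le> 1 * (1 - (cmod a)^2) / (1 - \<eta>2)"
    using den e1 aa ul e0
    by (intro frac_le mult_mono) (auto simp: abs_square_le_1 power_le_one)
  finally show ?thesis by (simp add: a_def)
qed



lemma arith1:
  fixes q p sA L e :: real
  assumes "q > 0" "p > 0" "sA > 0"
  shows "(3*L*e/(sA*q/2)) * (2*q/p) = 12*L*e/(sA*p)"
  using assms by (simp add: field_simps)

lemma arith2:
  fixes p u sA L t :: real
  assumes "p > 0" "u > 0" "sA > 0"
  shows "12*L*(4*t/u)/(sA*p) = 48*L*t/(sA*p*u)"
  using assms by (simp add: field_simps)

lemma arith3:
  fixes p u sA L t c :: real
  assumes "48*L*t \<le> c * sA * p * u" "p > 0" "u > 0" "sA > 0"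
  shows "48*L*t/(sA*p*u) \<le> c"
  using assms by (simp add: divide_le_eq mult.commute mult.left_commute)

theorem mainTheorem11:
  fixes g :: "complex \<Rightarrow> complex"
  assumes "univalent g"
  shows "\<not> (\<exists>\<eta> \<delta> c. 0 < \<eta> \<and> \<eta> < 1 \<and> \<delta> > 0 \<and> c > 0 \<and>
            (\<forall>\<alpha> \<in> ball 0 1.
               norm_area (G_set g c \<inter> pseudo_disc \<alpha> \<eta>) \<ge> \<delta> * norm_area (pseudo_disc \<alpha> \<eta>)))"
proof
  assume "\<exists>\<eta> \<delta> c. 0 < \<eta> \<and> \<eta> < 1 \<and> \<delta> > 0 \<and> c > 0 \<and>
            (\<forall>\<alpha> \<in> ball 0 1.
               norm_area (G_set g c \<inter> pseudo_disc \<alpha> \<eta>) \<ge> \<delta> * norm_area (pseudo_disc \<alpha> \<eta>))"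
  then obtain \<eta> \<delta> c where e0: "0 < \<eta>" and e1: "\<eta> < 1" and d0: "\<delta> > 0" and c0: "c > 0"
    and cond: "\<forall>\<alpha> \<in> ball 0 1. norm_area (G_set g c \<inter> pseudo_disc \<alpha> \<eta>) \<ge> \<delta> * norm_area (pseudo_disc \<alpha> \<eta>)"
    by blast
  have hol: "g holomorphic_on ball 0 1" and inj: "inj_on g (ball 0 1)"
    using assms by (auto simp: univalent_def)
  obtain w0 where w0: "\<forall>z\<in>ball 0 1. g z \<noteq> w0" using exists_omitted[OF assms] by blast
  have sc: "simply_connected (ball (0::complex) 1)" by (simp add: convex_imp_simply_connected)
  have hg0: "(\<lambda>z. g z - w0) holomorphic_on ball 0 1" using hol by (intro holomorphic_intros)
  obtain \<phi> where hol\<phi>: "\<phi> holomorphic_on ball 0 1" and \<phi>sq: "\<forall>z\<in>ball 0 1. g z - w0 = (\<phi> z)^2"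
    using sc w0 hg0 simply_connected_eq_holomorphic_sqrt[OF open_ball, of 0 1] by force
  have gphi: "g z = (\<phi> z)^2 + w0" if "z \<in> ball 0 1" for z using \<phi>sq that by (metis diff_add_cancel)
  have \<phi>inj: "inj_on \<phi> (ball 0 1)"
  proof (rule inj_onI)
    fix x y assume xy: "x \<in> ball 0 1" "y \<in> ball 0 1" "\<phi> x = \<phi> y"
    then have "g x = g y" using gphi by simp
    then show "x = y" using inj xy by (auto dest: inj_onD)
  qed
  have opn: "open (\<phi> ` ball 0 1)" by (rule open_mapping_thm3[OF hol\<phi> open_ball \<phi>inj])
  define s where "s = \<phi> 0"
  have "s \<in> \<phi> ` ball 0 1" by (simp add: s_def)
  then obtain \<rho>0 where \<rho>0: "\<rho>0 > 0" "ball s \<rho>0 \<subseteq> \<phi> ` ball 0 1" using opn openE by metis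
  have lowb: "\<rho>0 \<le> cmod (\<phi> z + s)" if zD: "z \<in> ball 0 1" for z
  proof (rule ccontr)
    assume "\<not> ?thesis"
    then have "- \<phi> z \<in> ball s \<rho>0" by (simp add: dist_norm add.commute)
    then obtain w where w: "w \<in> ball 0 1" "\<phi> w = - \<phi> z" using \<rho>0 by auto
    then have "g w = g z" using gphi zD by simp
    then have "w = z" using inj w zD by (auto dest: inj_onD)
    then have "\<phi> z = 0" using w by simp
    then have "g z = w0" using gphi zD by simp
    then show False using w0 zD by blast
  qed
  define r0 where "r0 = Inf ((\<lambda>z. cmod (\<phi> z + s)) ` ball 0 1)"
  have bdd: "bdd_below ((\<lambda>z. cmod (\<phi> z + s)) ` ball 0 1)" by (rule bdd_belowI[of _ 0]) auto
  have r0le: "r0 \<le> cmod (\<phi> z + s)" if "z \<in> ball 0 1" for z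
    unfolding r0_def by (rule cInf_lower[OF _ bdd]) (use that in auto)
  have r0ge: "\<rho>0 \<le> r0" unfolding r0_def by (rule cINF_greatest) (auto simp: lowb)
  have r0pos: "r0 > 0" using r0ge \<rho>0 by simp
  have approx: "\<exists>z\<in>ball 0 1. cmod (\<phi> z + s) < r0 + e" if "e > 0" for e
  proof (rule ccontr)
    assume "\<not> ?thesis"
    then have "r0 + e \<le> r0" unfolding r0_def[of] by (intro cINF_greatest) (auto simp: not_less r0_def)
    then show False using that by simp
  qed
  define \<eta>2 where "\<eta>2 = (1+\<eta>)/2"
  have e2: "\<eta> < \<eta>2" "\<eta>2 < 1" "0 < \<eta>2" using e0 e1 by (auto simp: \<eta>2_def)
  define sA where "sA = min ((\<eta>2-\<eta>)/4) ((1-\<eta>^2)/8)"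
  have sApos: "sA > 0" using e0 e1 e2 by (auto simp: sA_def power_less_one_iff abs_square_less_1)
  define L0 where "L0 = 4*r0*(4*r0 + 2*cmod s)"
  have L0pos: "L0 > 0" using r0pos by (simp add: L0_def add_pos_nonneg)
  define \<tau> where "\<tau> = min ((1-\<eta>2)/16) (c * sA*(1-\<eta>)*(1-\<eta>2)/(48*L0))"
  have t0: "\<tau> > 0" using e1 e2 c0 sApos L0pos by (auto simp: \<tau>_def)
  have t1: "\<tau> \<le> (1-\<eta>2)/16" unfolding \<tau>_def by (rule min.cobounded1)
  have t2: "48*L0*\<tau> \<le> c * sA*(1-\<eta>)*(1-\<eta>2)"
  proof -
    have "\<tau> \<le> c * sA*(1-\<eta>)*(1-\<eta>2)/(48*L0)" unfolding \<tau>_def by (rule min.cobounded2)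
    then show ?thesis using L0pos by (simp add: le_divide_eq mult.commute)
  qed
  have t3: "\<tau> < 1" using t1 e2 by simp
  define r where "r = r0*(1-\<tau>)"
  have rpos: "r > 0" and rle: "r \<le> r0" using r0pos t0 t3 by (auto simp: r_def mult_left_le_one_le)
  define H where "H = (\<lambda>z. r/(\<phi> z + s))"
  have nz: "\<phi> z + s \<noteq> 0" if "z \<in> ball 0 1" for z using lowb[OF that] \<rho>0 by auto
  have holH: "H holomorphic_on ball 0 1"
    unfolding H_def by (intro holomorphic_intros hol\<phi>) (use nz in auto)
  have Hle: "cmod (H z) \<le> 1 - \<tau>" if "z \<in> ball 0 1" for z
  proof -
    have p: "0 < cmod (\<phi> z + s)" using r0le[OF that] r0pos by linarith
    have "cmod (H z) = r / cmod (\<phi> z + s)" using rpos by (simp add: H_def norm_divide)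
    also have "\<dots> \<le> r / r0" using r0le[OF that] r0pos rpos mult_pos_pos[OF p r0pos] by (intro divide_left_mono) auto
    also have "\<dots> = 1 - \<tau>" using r0pos by (simp add: r_def)
    finally show ?thesis .
  qed
  have H1: "cmod (H z) < 1" if "cmod z < 1" for z using Hle[of z] that t0 by simp
  obtain \<alpha> where \<alpha>: "\<alpha> \<in> ball 0 1" "cmod (\<phi> \<alpha> + s) < r0 + r0*\<tau>"
    using approx[of "r0*\<tau>"] r0pos t0 by auto
  have a1: "cmod \<alpha> < 1" using \<alpha> by simp
  define a where "a = H \<alpha>"
  have alow: "cmod a \<ge> 1 - 2*\<tau>"
  proof -
    have pos: "0 < cmod (\<phi> \<alpha> + s)" using nz[OF \<alpha>(1)] by simp
    have "1 - 2*\<tau> \<le> (1-\<tau>)/(1+\<tau>)" using t0 by (simp add: field_simps power2_eq_square)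
    also have "\<dots> = r / (r0*(1+\<tau>))" using r0pos by (simp add: r_def)
    also have "\<dots> \<le> r / cmod (\<phi> \<alpha> + s)" using \<alpha>(2) pos rpos mult_pos_pos[OF pos mult_pos_pos[OF r0pos, of "1+\<tau>"]] t0
      by (intro divide_left_mono) (auto simp: algebra_simps)
    also have "\<dots> = cmod a" using rpos by (simp add: a_def H_def norm_divide)
    finally show ?thesis .
  qed
  have aup: "cmod a \<le> 1" using Hle[OF \<alpha>(1)] t0 by (simp add: a_def)
  define \<epsilon> where "\<epsilon> = 4*\<tau>/(1-\<eta>2)"
  have eps0: "\<epsilon> > 0" using t0 e2 by (simp add: \<epsilon>_def)
  have epsA4: "\<epsilon> \<le> 1/4" using t1 e2 by (simp add: \<epsilon>_def divide_le_eq)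
  have Hclose: "cmod (H z - a) \<le> \<epsilon>" if z: "z \<in> pseudo_disc \<alpha> \<eta>2" for z
  proof -
    have "cmod (H z - a) \<le> (1 - (cmod a)^2)/(1 - \<eta>2)"
      using Schwarz_bound[OF holH H1 a1 e2(3) e2(2) z] by (simp add: a_def)
    also have "\<dots> \<le> 4*\<tau>/(1-\<eta>2)"
    proof (intro divide_right_mono)
      have "1 - (cmod a)^2 = (1 - cmod a)*(1 + cmod a)" by (simp add: power2_eq_square algebra_simps)
      also have "\<dots> \<le> (2*\<tau>) * 2" using alow aup by (intro mult_mono) auto
      finally show "1 - (cmod a)^2 \<le> 4*\<tau>" by simp
    qed (use e2 in auto)
    finally show ?thesis by (simp add: \<epsilon>_def)
  qed
  have Hbig: "cmod (H z) \<ge> 1/2" if z: "z \<in> pseudo_disc \<alpha> \<eta>2" for z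
  proof -
    have "cmod a \<le> cmod (H z) + cmod (H z - a)" by (metis add.commute diff_add_cancel norm_triangle_ineq norm_minus_commute)
    moreover have "2*\<tau> \<le> 1/8" using t1 e2 by simp
    ultimately show ?thesis using Hclose[OF z] alow epsA4 by argo
  qed
  have pdD: "pseudo_disc \<alpha> \<eta>2 \<subseteq> ball 0 1" by (auto simp: pseudo_disc_def)
  have phis: "\<phi> z + s = r / H z" "cmod (\<phi> z + s) \<le> 2*r" if z: "z \<in> pseudo_disc \<alpha> \<eta>2" for z
  proof -
    have zD: "z \<in> ball 0 1" using z pdD by auto
    show eq: "\<phi> z + s = r / H z" using nz[OF zD] rpos by (simp add: H_def)
    have "cmod (\<phi> z + s) = r / cmod (H z)" using eq rpos by (simp add: norm_divide)
    also have "\<dots> \<le> r / (1/2)" using Hbig[OF z] rpos by (intro divide_left_mono) (auto intro!: mult_pos_pos)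
    finally show "cmod (\<phi> z + s) \<le> 2*r" by simp
  qed
  have glip: "cmod (g w - g z) \<le> L0 * (2*\<epsilon>)" if z: "z \<in> pseudo_disc \<alpha> \<eta>2" and w: "w \<in> pseudo_disc \<alpha> \<eta>2" for z w
  proof -
    have zD: "z \<in> ball 0 1" and wD: "w \<in> ball 0 1" using z w pdD by auto
    have hz: "H z \<noteq> 0" and hw: "H w \<noteq> 0" using Hbig[OF z] Hbig[OF w] by auto
    have "g w - g z = (\<phi> w - \<phi> z) * (\<phi> w + \<phi> z)"
      using gphi[OF zD] gphi[OF wD] by (simp add: power2_eq_square algebra_simps)
    also have "\<phi> w - \<phi> z = r * (H z - H w) / (H w * H z)"
    proof -
      have "\<phi> w - \<phi> z = (\<phi> w + s) - (\<phi> z + s)" by simp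
      also have "\<dots> = r / H w - r / H z" using phis(1)[OF z] phis(1)[OF w] by simp
      also have "\<dots> = r * (H z - H w) / (H w * H z)" using hz hw by (simp add: field_simps)
      finally show ?thesis .
    qed
    finally have eq: "g w - g z = r * (H z - H w) / (H w * H z) * (\<phi> w + \<phi> z)" .
    have d1: "cmod (H z - H w) \<le> 2*\<epsilon>"
      using Hclose[OF z] Hclose[OF w] norm_triangle_ineq4[of "H z - a" "H w - a"] by (simp add: norm_minus_commute)
    have d2: "cmod (H w * H z) \<ge> 1/4"
    proof -
      have "1/2 * (1/2) \<le> cmod (H w) * cmod (H z)" using Hbig[OF z] Hbig[OF w] by (intro mult_mono) auto
      then show ?thesis by (simp add: norm_mult)
    qed
    have d3: "cmod (\<phi> w + \<phi> z) \<le> 4*r + 2*cmod s"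
    proof -
      have e: "\<phi> w + \<phi> z = ((\<phi> w + s) + (\<phi> z + s)) - 2 * s" by simp
      have "cmod (\<phi> w + \<phi> z) \<le> cmod ((\<phi> w + s) + (\<phi> z + s)) + cmod (2 * s)"
        by (subst e) (rule norm_triangle_ineq4)
      moreover have "cmod ((\<phi> w + s) + (\<phi> z + s)) \<le> cmod (\<phi> w + s) + cmod (\<phi> z + s)"
        by (rule norm_triangle_ineq)
      ultimately have "cmod (\<phi> w + \<phi> z) \<le> cmod (\<phi> w + s) + cmod (\<phi> z + s) + cmod (2 * s)"
        by argo
      then show ?thesis using phis(2)[OF z] phis(2)[OF w] by (simp add: norm_mult)
    qed
    have "cmod (g w - g z) = r * cmod (H z - H w) / cmod (H w * H z) * cmod (\<phi> w + \<phi> z)"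
      using rpos by (simp add: eq norm_mult norm_divide)
    also have "\<dots> \<le> r * (2*\<epsilon>) / (1/4) * (4*r + 2*cmod s)"
      using d1 d2 d3 rpos eps0
      by (intro mult_mono frac_le mult_left_mono) auto
    also have "\<dots> = 4*r*(4*r + 2*cmod s) * (2*\<epsilon>)" by simp
    also have "\<dots> \<le> L0 * (2*\<epsilon>)" unfolding L0_def using rle rpos eps0
      by (intro mult_right_mono mult_mono add_mono) auto
    finally show ?thesis .
  qed
  have key: "cmod (deriv g z) * (1 - cmod z) \<le> c" if z: "z \<in> pseudo_disc \<alpha> \<eta>" for z
  proof -
    define R where "R = sA*(1 - cmod \<alpha>)/2"
    have R0: "R > 0" using sApos a1 by (simp add: R_def)
    have bsub: "ball z (2*R) \<subseteq> pseudo_disc \<alpha> \<eta>2"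
      using pd_ball_sub[OF e0 e2(1) e2(2) a1 z] by (simp add: R_def sA_def)
    have cb: "cball z R \<subseteq> ball z (2*R)" using R0 by (simp add: cball_subset_ball_iff)
    have zin: "z \<in> pseudo_disc \<alpha> \<eta>2" using bsub R0 by auto
    have holz: "g holomorphic_on ball z R"
      by (rule holomorphic_on_subset[OF hol]) (use bsub pdD ball_subset_cball cb in blast)
    have contz: "continuous_on (cball z R) g"
      by (rule continuous_on_subset[OF holomorphic_on_imp_continuous_on[OF hol]]) (use bsub pdD cb in blast)
    have fin: "g w \<in> ball (g z) (3*L0*\<epsilon>)" if "w \<in> ball z R" for w
    proof -
      have "w \<in> pseudo_disc \<alpha> \<eta>2" using that bsub ball_subset_cball cb by blast
      then have "cmod (g w - g z) \<le> L0 * (2*\<epsilon>)" using glip zin by blast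
      also have "\<dots> < 3*L0*\<epsilon>" using L0pos eps0 by simp
      finally show ?thesis by (simp add: dist_norm norm_minus_commute)
    qed
    have "cmod ((deriv ^^ (1::nat)) g z) \<le> fact (1::nat) * (3*L0*\<epsilon>) / R^(1::nat)"
      using Cauchy_higher_deriv_bound[OF holz contz fin R0, of "1::nat"] by simp
    then have dg: "cmod (deriv g z) \<le> 3*L0*\<epsilon> / R" by simp
    have up: "1 - cmod z \<le> 2*(1-cmod \<alpha>)/(1-\<eta>)" by (rule pd_upper[OF e0 e1 a1 z])
    have z1: "cmod z < 1" using z by (simp add: pseudo_disc_def)
    have "cmod (deriv g z) * (1 - cmod z) \<le> (3*L0*\<epsilon>/R) * (2*(1-cmod \<alpha>)/(1-\<eta>))"
      using dg up z1 L0pos eps0 R0 by (intro mult_mono) auto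
    also have "\<dots> = 12*L0*\<epsilon>/(sA*(1-\<eta>))"
      unfolding R_def by (rule arith1) (use a1 sApos e1 in auto)
    also have "\<dots> = 48*L0*\<tau>/(sA*(1-\<eta>)*(1-\<eta>2))"
      unfolding \<epsilon>_def by (rule arith2) (use e2 e1 sApos in auto)
    also have "\<dots> \<le> c"
      by (rule arith3[OF t2]) (use e2 e1 sApos in auto)
    finally show ?thesis .
  qed
  have empty: "G_set g c \<inter> pseudo_disc \<alpha> \<eta> = {}"
  proof (rule ccontr)
    assume "\<not> ?thesis"
    then obtain z where zG: "z \<in> G_set g c" and zP: "z \<in> pseudo_disc \<alpha> \<eta>" by blast
    then show False using key[OF zP] by (simp add: G_set_def)
  qed
  have z0: "norm_area (G_set g c \<inter> pseudo_disc \<alpha> \<eta>) = 0" by (simp add: empty norm_area_def)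
  have "\<delta> * norm_area (pseudo_disc \<alpha> \<eta>) \<le> 0"
    using cond \<alpha>(1) z0 by metis
  moreover have "\<delta> * norm_area (pseudo_disc \<alpha> \<eta>) > 0"
    using pd_area_pos[OF e0 e1 a1] d0 by simp
  ultimately show False by simp
qed


end
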